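(* Let $\Phi:\mathbb{R}^2\to\mathbb{R}^2$, $\Phi(u,v)=(\varphi(u,v),\psi(u,v))$, where $\varphi$ and $\psi$ are harmonic functions on $\mathbb{R}^2$. Then $\inf_{\mathbb{R}^2}|J_\Phi|=0$, where $J_\Phi=\varphi_u\psi_v-\varphi_v\psi_u$, unless $\Phi$ is an affine map. *)

theory Defs
  imports "HOL-Analysis.Analysis"
begin

definition pu :: "(real \<times> real \<Rightarrow> real) \<Rightarrow> real \<times> real \<Rightarrow> real" where
  "pu f p = deriv (\<lambda>s. f (s, snd p)) (fst p)"

definition pv :: "(real \<times> real \<Rightarrow> real) \<Rightarrow> real \<times> real \<Rightarrow> real" where
  "pv f p = deriv (\<lambda>t. f (fst p, t)) (snd p)"

definition C2_plane :: "(real \<times> real \<Rightarrow> real) \<Rightarrow> bool" where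
  "C2_plane f \<longleftrightarrow>
     (\<forall>p. f differentiable (at p)) \<and>
     (\<forall>p. pu f differentiable (at p)) \<and>
     (\<forall>p. pv f differentiable (at p)) \<and>
     continuous_on UNIV (pu (pu f)) \<and> continuous_on UNIV (pv (pu f)) \<and>
     continuous_on UNIV (pu (pv f)) \<and> continuous_on UNIV (pv (pv f))"

definition harmonic_plane :: "(real \<times> real \<Rightarrow> real) \<Rightarrow> bool" where
  "harmonic_plane f \<longleftrightarrow> C2_plane f \<and> (\<forall>p. pu (pu f) p + pv (pv f) p = 0)"

definition jac :: "(real \<times> real \<Rightarrow> real) \<Rightarrow> (real \<times> real \<Rightarrow> real) \<Rightarrow> real \<times> real \<Rightarrow> real" where
  "jac \<phi> \<psi> p = pu \<phi> p * pv \<psi> p - pv \<phi> p * pu \<psi> p"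

definition affine_map_plane :: "(real \<times> real \<Rightarrow> real) \<Rightarrow> (real \<times> real \<Rightarrow> real) \<Rightarrow> bool" where
  "affine_map_plane \<phi> \<psi> \<longleftrightarrow>
     (\<exists>a b c d e g. \<forall>u v. \<phi> (u, v) = a * u + b * v + c \<and> \<psi> (u, v) = d * u + e * v + g)"

end

theory Submission imports Defs "HOL-Complex_Analysis.Complex_Analysis" begin

lemma partial_aux:
  assumes "(g has_derivative D) (at (x,y))"
  shows "((\<lambda>s. g (s,y)) has_real_derivative D (1,0)) (at x)"
    and "((\<lambda>t. g (x,t)) has_real_derivative D (0,1)) (at y)"
proof -
  have lin: "linear D" using assms has_derivative_linear by blast
  have "((\<lambda>s. (s,y)) has_derivative (\<lambda>h. (h,0))) (at x)"
    by (auto intro!: derivative_eq_intros)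
  from has_derivative_compose[OF this assms]
  have "((\<lambda>s. g (s,y)) has_derivative (\<lambda>h. D (h,0))) (at x)" by simp
  moreover have "(\<lambda>h. D (h,0)) = (*) (D (1,0))"
  proof
    fix h show "D (h,0) = D (1,0) * h"
      using linear_scale[OF lin, of h "(1,0)"] by (simp add: mult.commute)
  qed
  ultimately show "((\<lambda>s. g (s,y)) has_real_derivative D (1,0)) (at x)"
    unfolding has_field_derivative_def by simp
  have "((\<lambda>t. (x,t)) has_derivative (\<lambda>h. (0,h))) (at y)"
    by (auto intro!: derivative_eq_intros)
  from has_derivative_compose[OF this assms]
  have "((\<lambda>t. g (x,t)) has_derivative (\<lambda>h. D (0,h))) (at y)" by simp
  moreover have "(\<lambda>h. D (0,h)) = (*) (D (0,1))"
  proof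
    fix h show "D (0,h) = D (0,1) * h"
      using linear_scale[OF lin, of h "(0,1)"] by (simp add: mult.commute)
  qed
  ultimately show "((\<lambda>t. g (x,t)) has_real_derivative D (0,1)) (at y)"
    unfolding has_field_derivative_def by simp
qed

lemma partials:
  assumes "g differentiable (at p)"
  shows "((\<lambda>s. g (s, snd p)) has_real_derivative pu g p) (at (fst p))"
    and "((\<lambda>t. g (fst p, t)) has_real_derivative pv g p) (at (snd p))"
    and "(g has_derivative (\<lambda>h. pu g p * fst h + pv g p * snd h)) (at p)"
proof -
  obtain D where D: "(g has_derivative D) (at p)" using assms differentiable_def by blast
  obtain x y where p: "p = (x,y)" by (cases p)
  note a = partial_aux[OF D[unfolded p]]
  have e1: "pu g p = D (1,0)" unfolding pu_def p using DERIV_imp_deriv[OF a(1)] by simp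
  have e2: "pv g p = D (0,1)" unfolding pv_def p using DERIV_imp_deriv[OF a(2)] by simp
  show "((\<lambda>s. g (s, snd p)) has_real_derivative pu g p) (at (fst p))"
    using a(1) e1 p by simp
  show "((\<lambda>t. g (fst p, t)) has_real_derivative pv g p) (at (snd p))"
    using a(2) e2 p by simp
  have lin: "linear D" using D has_derivative_linear by blast
  have "D h = pu g p * fst h + pv g p * snd h" for h
  proof -
    have "h = fst h *\<^sub>R (1,0) + snd h *\<^sub>R (0,1)" by (cases h) simp
    then have "D h = D (fst h *\<^sub>R (1,0)) + D (snd h *\<^sub>R (0,1))"
      by (metis linear_add[OF lin])
    also have "\<dots> = fst h * D (1,0) + snd h * D (0,1)"
      using linear_scale[OF lin, of "fst h" "(1,0)"] linear_scale[OF lin, of "snd h" "(0,1)"] by simp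
    finally show ?thesis using e1 e2 by (simp add: mult.commute)
  qed
  then have "D = (\<lambda>h. pu g p * fst h + pv g p * snd h)" by auto
  then show "(g has_derivative (\<lambda>h. pu g p * fst h + pv g p * snd h)) (at p)" using D by simp
qed

lemma close_pt:
  assumes "x < a" "a < x + h" "y < b" "b < y + h" "h = \<delta>/2" "\<delta> > 0"
  shows "dist (a,b) (x,y) < \<delta>"
proof -
  have "(dist a x)\<^sup>2 < h\<^sup>2" "(dist b y)\<^sup>2 < h\<^sup>2"
    using assms by (auto simp: dist_real_def intro!: power_strict_mono)
  moreover have "h\<^sup>2 + h\<^sup>2 < \<delta>\<^sup>2" using assms by (simp add: power2_eq_square field_simps)
  ultimately have "(dist a x)\<^sup>2 + (dist b y)\<^sup>2 < \<delta>\<^sup>2" by linarith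
  then have "sqrt ((dist a x)\<^sup>2 + (dist b y)\<^sup>2) < sqrt (\<delta>\<^sup>2)"
    using real_sqrt_less_mono by blast
  then show ?thesis using assms by (simp add: dist_Pair_Pair)
qed

lemma abs_aux: "\<bar>u - P\<bar> < \<bar>P - Q\<bar> / 2 \<Longrightarrow> \<bar>w - Q\<bar> < \<bar>P - Q\<bar> / 2 \<Longrightarrow> u = w \<Longrightarrow> False"
  for u P Q w :: real by (cases "u \<le> P"; cases "u \<le> Q"; cases "P \<le> Q") (auto simp: abs_if split: if_splits)

lemma schwarz:
  assumes C: "C2_plane f"
  shows "pv (pu f) p = pu (pv f) p"
proof (rule ccontr)
  assume ne: "pv (pu f) p \<noteq> pu (pv f) p"
  define e where "e = \<bar>pv (pu f) p - pu (pv f) p\<bar> / 2"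
  have e: "e > 0" using ne by (simp add: e_def)
  have df: "\<And>q. f differentiable (at q)" and dfu: "\<And>q. pu f differentiable (at q)"
    and dfv: "\<And>q. pv f differentiable (at q)"
    and c1: "continuous_on UNIV (pv (pu f))" and c2: "continuous_on UNIV (pu (pv f))"
    using C unfolding C2_plane_def by auto
  obtain d1 where d1: "d1 > 0" "\<And>q. dist q p < d1 \<Longrightarrow> dist (pv (pu f) q) (pv (pu f) p) < e"
    using c1 e unfolding continuous_on_iff by (meson UNIV_I)
  obtain d2 where d2: "d2 > 0" "\<And>q. dist q p < d2 \<Longrightarrow> dist (pu (pv f) q) (pu (pv f) p) < e"
    using c2 e unfolding continuous_on_iff by (meson UNIV_I)
  define \<delta> where "\<delta> = min d1 d2"
  define h where "h = \<delta> / 2"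
  have dpos: "\<delta> > 0" using d1 d2 by (simp add: \<delta>_def)
  have hpos: "h > 0" using dpos by (simp add: h_def)
  obtain x y where p: "p = (x,y)" by (cases p)
  define \<Delta> where "\<Delta> = f (x+h,y+h) - f (x+h,y) - f (x,y+h) + f (x,y)"
  obtain \<xi> where \<xi>: "x < \<xi>" "\<xi> < x + h"
    "(f (x+h,y+h) - f (x+h,y)) - (f (x,y+h) - f (x,y)) = (x + h - x) * (pu f (\<xi>,y+h) - pu f (\<xi>,y))"
  proof -
    have "\<And>s. DERIV (\<lambda>s. f (s,y+h) - f (s,y)) s :> pu f (s,y+h) - pu f (s,y)"
      using partials(1)[OF df, of "(_, y+h)"] partials(1)[OF df, of "(_, y)"]
      by (auto intro!: derivative_eq_intros)
    from MVT2[of x "x+h", OF _ this] hpos show ?thesis using that by auto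
  qed
  obtain \<eta> where \<eta>: "y < \<eta>" "\<eta> < y + h"
    "pu f (\<xi>,y+h) - pu f (\<xi>,y) = (y + h - y) * pv (pu f) (\<xi>,\<eta>)"
  proof -
    have "\<And>t. DERIV (\<lambda>t. pu f (\<xi>,t)) t :> pv (pu f) (\<xi>,t)"
      using partials(2)[OF dfu, of "(\<xi>, _)"] by auto
    from MVT2[of y "y+h", OF _ this] hpos show ?thesis using that by auto
  qed
  have A: "\<Delta> = h * h * pv (pu f) (\<xi>,\<eta>)" using \<xi> \<eta> by (simp add: \<Delta>_def)
  obtain \<eta>' where \<eta>': "y < \<eta>'" "\<eta>' < y + h"
    "(f (x+h,y+h) - f (x,y+h)) - (f (x+h,y) - f (x,y)) = (y + h - y) * (pv f (x+h,\<eta>') - pv f (x,\<eta>'))"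
  proof -
    have "\<And>t. DERIV (\<lambda>t. f (x+h,t) - f (x,t)) t :> pv f (x+h,t) - pv f (x,t)"
      using partials(2)[OF df, of "(x+h, _)"] partials(2)[OF df, of "(x, _)"]
      by (auto intro!: derivative_eq_intros)
    from MVT2[of y "y+h", OF _ this] hpos show ?thesis using that by auto
  qed
  obtain \<xi>' where \<xi>': "x < \<xi>'" "\<xi>' < x + h"
    "pv f (x+h,\<eta>') - pv f (x,\<eta>') = (x + h - x) * pu (pv f) (\<xi>',\<eta>')"
  proof -
    have "\<And>s. DERIV (\<lambda>s. pv f (s,\<eta>')) s :> pu (pv f) (s,\<eta>')"
      using partials(1)[OF dfv, of "(_, \<eta>')"] by auto
    from MVT2[of x "x+h", OF _ this] hpos show ?thesis using that by auto
  qed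
  have B: "\<Delta> = h * h * pu (pv f) (\<xi>',\<eta>')" using \<xi>' \<eta>' by (simp add: \<Delta>_def algebra_simps)
  have AB: "pv (pu f) (\<xi>,\<eta>) = pu (pv f) (\<xi>',\<eta>')" using A B hpos by simp
  have "dist (\<xi>,\<eta>) p < \<delta>" "dist (\<xi>',\<eta>') p < \<delta>"
    using close_pt[OF \<xi>(1,2) \<eta>(1,2) h_def dpos] close_pt[OF \<xi>'(1,2) \<eta>'(1,2) h_def dpos] p by auto
  then have "dist (pv (pu f) (\<xi>,\<eta>)) (pv (pu f) p) < e" "dist (pu (pv f) (\<xi>',\<eta>')) (pu (pv f) p) < e"
    using d1 d2 by (auto simp: \<delta>_def)
  then show False using AB unfolding e_def dist_real_def by (metis abs_aux)
qed

definition cf :: "(real \<times> real \<Rightarrow> real) \<Rightarrow> complex \<Rightarrow> complex" where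
  "cf \<phi> z = Complex (pu \<phi> (Re z, Im z)) (- pv \<phi> (Re z, Im z))"

lemma cf_deriv:
  assumes H: "harmonic_plane \<phi>"
  shows "(cf \<phi> has_field_derivative Complex (pu (pu \<phi>) (Re z, Im z)) (- pu (pv \<phi>) (Re z, Im z))) (at z)"
proof -
  define q where "q = (Re z, Im z)"
  have C: "C2_plane \<phi>" and lap: "pu (pu \<phi>) q + pv (pv \<phi>) q = 0"
    using H unfolding harmonic_plane_def by (auto simp: q_def)
  have dfu: "pu \<phi> differentiable (at q)" and dfv: "pv \<phi> differentiable (at q)"
    using C unfolding C2_plane_def by (auto simp: q_def)
  have sw: "pv (pu \<phi>) q = pu (pv \<phi>) q" by (rule schwarz[OF C])
  have dR: "((\<lambda>z. (Re z, Im z)) has_derivative (\<lambda>k. (Re k, Im k))) (at z)"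
    by (auto intro!: derivative_eq_intros)
  have dA: "((\<lambda>z. pu \<phi> (Re z, Im z)) has_derivative
      (\<lambda>k. pu (pu \<phi>) q * Re k + pv (pu \<phi>) q * Im k)) (at z)"
    using has_derivative_compose[OF dR partials(3)[OF dfu[unfolded q_def]]] by (simp add: q_def)
  have dC: "((\<lambda>z. pv \<phi> (Re z, Im z)) has_derivative
      (\<lambda>k. pu (pv \<phi>) q * Re k + pv (pv \<phi>) q * Im k)) (at z)"
    using has_derivative_compose[OF dR partials(3)[OF dfv[unfolded q_def]]] by (simp add: q_def)
  have eq: "cf \<phi> = (\<lambda>z. of_real (pu \<phi> (Re z, Im z)) + \<i> * of_real (- pv \<phi> (Re z, Im z)))"
    by (auto simp: cf_def complex_eq_iff)
  have "(cf \<phi> has_derivative (\<lambda>k. of_real (pu (pu \<phi>) q * Re k + pv (pu \<phi>) q * Im k)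
        + \<i> * of_real (- (pu (pv \<phi>) q * Re k + pv (pv \<phi>) q * Im k)))) (at z)"
    unfolding eq
    by (intro has_derivative_add has_derivative_mult_right has_derivative_of_real has_derivative_minus dA dC)
  moreover have "(\<lambda>k. of_real (pu (pu \<phi>) q * Re k + pv (pu \<phi>) q * Im k)
        + \<i> * of_real (- (pu (pv \<phi>) q * Re k + pv (pv \<phi>) q * Im k)))
      = (\<lambda>k. Complex (pu (pu \<phi>) q) (- pu (pv \<phi>) q) * k)"
  proof (rule ext)
    fix k
    have l2: "pv (pv \<phi>) q = - pu (pu \<phi>) q" using lap by linarith
    show "of_real (pu (pu \<phi>) q * Re k + pv (pu \<phi>) q * Im k)
        + \<i> * of_real (- (pu (pv \<phi>) q * Re k + pv (pv \<phi>) q * Im k))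
      = Complex (pu (pu \<phi>) q) (- pu (pv \<phi>) q) * k"
      unfolding l2 sw by (simp add: complex_eq_iff algebra_simps)
  qed
  ultimately show ?thesis unfolding has_field_derivative_def q_def by simp
qed

lemma cf_holo: "harmonic_plane \<phi> \<Longrightarrow> cf \<phi> holomorphic_on UNIV"
  using cf_deriv holomorphic_on_def field_differentiable_def by blast

lemma sq_bound:
  assumes "(x::real) \<ge> 0" "x\<^sup>2 \<le> B" shows "x \<le> 1 + B"
proof (cases "x \<le> 1")
  case True
  have "B \<ge> 0" using zero_le_power2[of x] assms by linarith
  then show ?thesis using True by linarith
next
  case False
  have "x * 1 \<le> x * x" using False by (intro mult_left_mono) auto
  then show ?thesis using assms by (simp add: power2_eq_square)
qed

lemma two_entire_const:
  fixes H K :: "complex \<Rightarrow> complex"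
  assumes hH: "H holomorphic_on UNIV" and hK: "K holomorphic_on UNIV" and e: "e > 0"
    and ineq: "\<And>z. (norm (H z))\<^sup>2 - (norm (K z))\<^sup>2 \<ge> e"
  shows "\<exists>a b. \<forall>z. H z = a \<and> K z = b"
proof -
  have lt: "norm (K z) < norm (H z)" for z
  proof -
    have "(norm (K z))\<^sup>2 < (norm (H z))\<^sup>2" using ineq[of z] e by linarith
    then show ?thesis using power2_less_imp_less by fastforce
  qed
  have nz: "H z \<noteq> 0" for z using lt[of z] by auto
  define Q where "Q = (\<lambda>z. K z / H z)"
  have hQ: "Q holomorphic_on UNIV" unfolding Q_def using hH hK nz by (intro holomorphic_intros) auto
  have "norm (Q z) \<le> 1" for z using lt[of z] nz[of z] by (simp add: Q_def norm_divide divide_le_eq_1)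
  then have "bounded (range Q)" unfolding bounded_iff by blast
  from Liouville_theorem[OF hQ this] obtain l where l: "\<And>z. Q z = l"
    unfolding constant_on_def by blast
  have Kl: "K z = l * H z" for z using l[of z] nz[of z] by (simp add: Q_def field_simps)
  have l1: "norm l < 1" using lt[of 0] Kl[of 0] nz[of 0] by (simp add: norm_mult)
  have "(norm (H z))\<^sup>2 * (1 - (norm l)\<^sup>2) \<ge> e" for z
    using ineq[of z] by (simp add: Kl norm_mult power_mult_distrib algebra_simps)
  have bd: "(norm (inverse (H z)))\<^sup>2 \<le> 1 / e" for z
  proof -
    have a: "(norm (H z))\<^sup>2 * (1 - (norm l)\<^sup>2) \<ge> e"
      using ineq[of z] by (simp add: Kl norm_mult power_mult_distrib algebra_simps)
    have "(norm l)\<^sup>2 \<ge> 0" by simp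
    then have he: "(norm (H z))\<^sup>2 \<ge> e" using a
      by (smt (verit) mult_left_le zero_le_power2)
    have "inverse ((norm (H z))\<^sup>2) \<le> inverse e" using le_imp_inverse_le[OF he e] .
    then show ?thesis by (simp add: norm_inverse power_inverse norm_divide inverse_eq_divide power_divide)
  qed
  have hI: "(\<lambda>z. inverse (H z)) holomorphic_on UNIV" using hH nz by (intro holomorphic_intros) auto
  have "bounded (range (\<lambda>z. inverse (H z)))" unfolding bounded_iff
    using sq_bound[OF norm_ge_zero bd] by blast
  from Liouville_theorem[OF hI this] obtain c where c: "\<And>z. inverse (H z) = c"
    unfolding constant_on_def by blast
  have "H z = inverse c" for z using c[of z] by (metis inverse_inverse_eq)
  then show ?thesis using Kl by auto
qed

lemma affine_from_partials:
  assumes df: "\<And>p. f differentiable (at p)" and A: "\<And>p. pu f p = a" and B: "\<And>p. pv f p = b"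
  shows "f (u, v) = a * u + b * v + f (0, 0)"
proof -
  define g where "g = (\<lambda>x. f x - (a * fst x + b * snd x))"
  have "(g has_derivative (\<lambda>h. 0)) (at x within UNIV)" for x
  proof -
    have "(g has_derivative (\<lambda>h. (pu f x * fst h + pv f x * snd h) - (a * fst h + b * snd h))) (at x)"
      unfolding g_def by (intro has_derivative_diff partials(3)[OF df]) (auto intro!: derivative_eq_intros)
    then show ?thesis using A B by simp
  qed
  from has_derivative_zero_constant[OF convex_UNIV this] obtain c where "\<And>x. g x = c" by blast
  then have "g (u,v) = g (0,0)" by simp
  then show ?thesis by (simp add: g_def)
qed

lemma jac_identity:
  "4 * jac \<phi> \<psi> (Re z, Im z) = (norm (cf \<phi> z + \<i> * cf \<psi> z))\<^sup>2 - (norm (cf \<phi> z - \<i> * cf \<psi> z))\<^sup>2"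
  unfolding cmod_power2 by (simp add: cf_def jac_def power2_eq_square algebra_simps)

lemma const_affine:
  assumes H: "harmonic_plane \<phi>" and c: "\<And>z. cf \<phi> z = w"
  shows "\<exists>a b c. \<forall>u v. \<phi> (u,v) = a*u + b * v + c"
proof -
  have df: "\<And>p. \<phi> differentiable (at p)" using H unfolding harmonic_plane_def C2_plane_def by auto
  have "pu \<phi> p = Re w" for p using arg_cong[OF c[of "Complex (fst p) (snd p)"], of Re] by (simp add: cf_def)
  moreover have "pv \<phi> p = - Im w" for p using arg_cong[OF c[of "Complex (fst p) (snd p)"], of Im] by (simp add: cf_def)
  ultimately show ?thesis using affine_from_partials[OF df] by blast
qed

theorem lemma3p2:
  fixes \<phi> \<psi> :: "real \<times> real \<Rightarrow> real"
  assumes "harmonic_plane \<phi>" and "harmonic_plane \<psi>"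
    and "\<not> affine_map_plane \<phi> \<psi>"
  shows "(INF p. \<bar>jac \<phi> \<psi> p\<bar>) = 0"
proof -
  define m where "m = (INF p. \<bar>jac \<phi> \<psi> p\<bar>)"
  have bdd: "bdd_below (range (\<lambda>p. \<bar>jac \<phi> \<psi> p\<bar>))" by (auto intro: bdd_belowI[of _ 0])
  have m0: "m \<ge> 0" unfolding m_def by (rule cINF_greatest) auto
  have lower: "\<And>p. m \<le> \<bar>jac \<phi> \<psi> p\<bar>" unfolding m_def using bdd by (rule cINF_lower) simp
  have "\<not> m > 0"
  proof
    assume mpos: "m > 0"
    define H where "H = (\<lambda>z. cf \<phi> z + \<i> * cf \<psi> z)"
    define K where "K = (\<lambda>z. cf \<phi> z - \<i> * cf \<psi> z)"
    have hF: "cf \<phi> holomorphic_on UNIV" "cf \<psi> holomorphic_on UNIV"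
      using cf_holo assms(1,2) by auto
    have hH: "H holomorphic_on UNIV" unfolding H_def using hF by (intro holomorphic_intros)
    have hK: "K holomorphic_on UNIV" unfolding K_def using hF by (intro holomorphic_intros)
    have id: "4 * jac \<phi> \<psi> (Re z, Im z) = (norm (H z))\<^sup>2 - (norm (K z))\<^sup>2" for z
      unfolding H_def K_def by (rule jac_identity)
    have C1: "C2_plane \<phi>" "C2_plane \<psi>" using assms(1,2) unfolding harmonic_plane_def by auto
    have cont: "continuous_on UNIV (jac \<phi> \<psi>)"
    proof -
      have "\<And>p. continuous (at p) (pu \<phi>)" "\<And>p. continuous (at p) (pv \<phi>)"
        "\<And>p. continuous (at p) (pu \<psi>)" "\<And>p. continuous (at p) (pv \<psi>)"
        using C1 unfolding C2_plane_def by (auto intro: differentiable_imp_continuous_within)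
      then have "\<And>p. continuous (at p) (jac \<phi> \<psi>)" unfolding jac_def[abs_def]
        by (intro continuous_intros) auto
      then show ?thesis by (simp add: continuous_at_imp_continuous_on)
    qed
    have sign: "(\<forall>p. jac \<phi> \<psi> p \<ge> m) \<or> (\<forall>p. jac \<phi> \<psi> p \<le> - m)"
    proof (rule ccontr)
      assume "\<not> ?thesis"
      then obtain p q where p: "jac \<phi> \<psi> p < m" and q: "jac \<phi> \<psi> q > - m" by (meson not_le)
      have p': "jac \<phi> \<psi> p \<le> - m" using p lower[of p] by linarith
      have q': "jac \<phi> \<psi> q \<ge> m" using q lower[of q] by linarith
      have "connected (range (jac \<phi> \<psi>))"
        using connected_continuous_image[OF cont connected_UNIV] .
      then have "0 \<in> range (jac \<phi> \<psi>)"
        unfolding connected_iff_interval using p' q' mpos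
        by (metis (no_types, lifting) rangeI linorder_not_le neg_less_0_iff_less order_less_imp_le order.strict_trans2)
      then obtain r where "jac \<phi> \<psi> r = 0" by auto
      then show False using lower[of r] mpos by simp
    qed
    have "\<exists>a b. \<forall>z. H z = a \<and> K z = b"
    proof (cases "\<forall>p. jac \<phi> \<psi> p \<ge> m")
      case True
      have "(norm (H z))\<^sup>2 - (norm (K z))\<^sup>2 \<ge> 4 * m" for z
        using id[of z] True by (metis mult_le_cancel_left_pos zero_less_numeral)
      from two_entire_const[OF hH hK _ this] mpos show ?thesis by simp
    next
      case False
      then have F: "\<forall>p. jac \<phi> \<psi> p \<le> - m" using sign by auto
      have "(norm (K z))\<^sup>2 - (norm (H z))\<^sup>2 \<ge> 4 * m" for z
        using id[of z] F[rule_format, of "(Re z, Im z)"] by linarith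
      from two_entire_const[OF hK hH _ this] mpos show ?thesis by auto
    qed
    then obtain a b where ab: "\<And>z. H z = a" "\<And>z. K z = b" by blast
    have "cf \<phi> z = (a + b) / 2" for z using ab[of z] by (auto simp: H_def K_def)
    from const_affine[OF assms(1) this] obtain a1 b1 c1 where A1: "\<forall>u v. \<phi> (u,v) = a1*u + b1 * v + c1" by blast
    have "cf \<psi> z = (a - b) / (2 * \<i>)" for z using ab[of z] by (auto simp: H_def K_def field_simps)
    from const_affine[OF assms(2) this] obtain a2 b2 c2 where A2: "\<forall>u v. \<psi> (u,v) = a2*u + b2 * v + c2" by blast
    have "affine_map_plane \<phi> \<psi>" unfolding affine_map_plane_def using A1 A2 by blast
    then show False using assms(3) by simp
  qed
  then show ?thesis using m0 by (simp add: m_def)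
qed

end
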